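(* Let $G$ be a group, $A\subseteq G$ a finite set, $N>0$ a real number and $\epsilon\in(0,1)$. Suppose $X\subseteq\operatorname{Stab}^r_N(A)$ is finite and nonempty. Then $|Z^\ell_\epsilon(A,X)|\leq 2N/\epsilon$. In particular, if $X\subseteq\operatorname{St}^r_{\epsilon^2/2}(A)$ is finite and nonempty, then $|Z^\ell_\epsilon(A,X)|\leq\epsilon|A|$.
   Context: $\operatorname{Stab}^r_N(A)=\{x\in G:|Ax\triangle A|\leq N\}$ ($\triangle$ symmetric difference) and $\operatorname{St}^r_\eta(A)=\operatorname{Stab}^r_{\eta|A|}(A)$. For finite $A,X\subseteq G$, $Z^\ell_\epsilon(A,X)=\{g\in G:\min\{|gX\cap A|,|gX\setminus A|\}\geq\epsilon|X|\}$. *)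

theory Defs
  imports Complex_Main
begin

text \<open>The ambient group G is a type of class group_add (not necessarily
commutative); the group product xy is written x + y.\<close>

definition rtrans :: "'a::group_add set \<Rightarrow> 'a \<Rightarrow> 'a set" where
  "rtrans A x = (\<lambda>a. a + x) ` A"

definition ltrans :: "'a::group_add \<Rightarrow> 'a set \<Rightarrow> 'a set" where
  "ltrans g X = (\<lambda>x. g + x) ` X"

definition symdiff :: "'a set \<Rightarrow> 'a set \<Rightarrow> 'a set" where
  "symdiff B C = (B - C) \<union> (C - B)"

definition Stab_r :: "real \<Rightarrow> 'a::group_add set \<Rightarrow> 'a set" where
  "Stab_r N A = {x. real (card (symdiff (rtrans A x) A)) \<le> N}"

definition St_r :: "real \<Rightarrow> 'a::group_add set \<Rightarrow> 'a set" where
  "St_r \<eta> A = Stab_r (\<eta> * real (card A)) A"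

definition Z_l :: "real \<Rightarrow> 'a::group_add set \<Rightarrow> 'a set \<Rightarrow> 'a set" where
  "Z_l \<epsilon> A X = {g. real (min (card (ltrans g X \<inter> A)) (card (ltrans g X - A)))
                       \<ge> \<epsilon> * real (card X)}"

end

theory Submission
  imports Defs
begin

lemma mem_rtrans: "(z::'a::group_add) \<in> rtrans A x \<longleftrightarrow> z + - x \<in> A"
proof
  assume "z \<in> rtrans A x"
  then obtain a where "a \<in> A" "z = a + x" unfolding rtrans_def by blast
  then show "z + - x \<in> A" by (simp add: add.assoc)
next
  assume "z + - x \<in> A"
  moreover have "z = (z + - x) + x" by (simp add: add.assoc)
  ultimately show "z \<in> rtrans A x" unfolding rtrans_def by (rule rev_image_eqI)
qed

lemma finite_rtrans: "finite A \<Longrightarrow> finite (rtrans A x)"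
  unfolding rtrans_def by simp

lemma img_eq: "(\<lambda>y::'a::group_add. y + x) ` S = {z. z + - x \<in> S}"
proof (rule set_eqI, rule iffI)
  fix z assume "z \<in> (\<lambda>y. y + x) ` S"
  then obtain y where "y \<in> S" "z = y + x" by blast
  then show "z \<in> {z. z + - x \<in> S}" by (simp add: add.assoc)
next
  fix z assume "z \<in> {z. z + - x \<in> S}"
  then have "z + - x \<in> S" by simp
  moreover have "z = (z + - x) + x" by (simp add: add.assoc)
  ultimately show "z \<in> (\<lambda>y. y + x) ` S" by (rule rev_image_eqI)
qed

lemma card_D:
  fixes A :: "'a::group_add set"
  shows "card (symdiff (rtrans A (-x)) A) = card (symdiff (rtrans A x) A)"
proof -
  have m1: "z + - x \<in> rtrans A (- x) \<longleftrightarrow> z \<in> A" for z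
    by (simp add: mem_rtrans add.assoc)
  have m2: "z \<in> rtrans A x \<longleftrightarrow> z + - x \<in> A" for z
    by (rule mem_rtrans)
  have eq: "symdiff (rtrans A x) A = (\<lambda>y. y + x) ` symdiff (rtrans A (-x)) A"
    unfolding img_eq symdiff_def using m1 m2 by blast
  have "inj_on (\<lambda>y. y + x) S" for S by (rule inj_onI) simp
  then show ?thesis unfolding eq by (simp add: card_image)
qed

lemma card_filter_sum: "finite X \<Longrightarrow> card {x\<in>X. P x} = (\<Sum>x\<in>X. if P x then 1 else (0::nat))"
  by (simp add: sum.If_cases Int_def)

lemma part1:
  fixes A :: "'a::group_add set" and N \<epsilon> :: real
  assumes fA: "finite A" and e: "0 < \<epsilon>" and fX: "finite X" and ne: "X \<noteq> {}"
    and XS: "X \<subseteq> Stab_r N A"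
  shows "finite (Z_l \<epsilon> A X) \<and> real (card (Z_l \<epsilon> A X)) * \<epsilon> \<le> N"
proof -
  define D where "D x = symdiff (rtrans A (-x)) A" for x
  define Z where "Z = Z_l \<epsilon> A X"
  have finD: "finite (D x)" for x
    unfolding D_def symdiff_def using fA finite_rtrans by blast
  have cardD: "real (card (D x)) \<le> N" if "x \<in> X" for x
    using XS that unfolding D_def Stab_r_def by (auto simp: card_D)
  have key: "\<epsilon> * real (card X) \<le> real (card {x\<in>X. g \<in> D x})" if "g \<in> Z" for g
  proof -
    have m: "\<epsilon> * real (card X) \<le> real (min (card (ltrans g X \<inter> A)) (card (ltrans g X - A)))"
      using that unfolding Z_def Z_l_def by simp
    have fin: "finite {x\<in>X. g \<in> D x}" using fX by simp
    have mr: "g \<in> rtrans A (-x) \<longleftrightarrow> g + x \<in> A" for x by (simp add: mem_rtrans)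
    show ?thesis
    proof (cases "g \<in> A")
      case True
      have "ltrans g X - A \<subseteq> (\<lambda>x. g + x) ` {x\<in>X. g \<in> D x}"
        unfolding ltrans_def D_def symdiff_def using True mr by auto
      note ss = this
      have "card (ltrans g X - A) \<le> card {x\<in>X. g \<in> D x}"
        by (rule order_trans[OF card_mono[OF finite_imageI[OF fin] ss] card_image_le[OF fin]])
      then show ?thesis using m by linarith
    next
      case False
      have "ltrans g X \<inter> A \<subseteq> (\<lambda>x. g + x) ` {x\<in>X. g \<in> D x}"
        unfolding ltrans_def D_def symdiff_def using False mr by auto
      note ss = this
      have "card (ltrans g X \<inter> A) \<le> card {x\<in>X. g \<in> D x}"
        by (rule order_trans[OF card_mono[OF finite_imageI[OF fin] ss] card_image_le[OF fin]])
      then show ?thesis using m by linarith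
    qed
  qed
  have cXpos: "0 < real (card X)" using fX ne by (simp add: card_gt_0_iff)
  have sub: "Z \<subseteq> (\<Union>x\<in>X. D x)"
  proof
    fix g assume "g \<in> Z"
    then have "0 < real (card {x\<in>X. g \<in> D x})" using key[of g] e cXpos
      by (smt (verit) mult_pos_pos)
    then have "{x\<in>X. g \<in> D x} \<noteq> {}" by (metis card.empty of_nat_0 less_irrefl)
    then show "g \<in> (\<Union>x\<in>X. D x)" by blast
  qed
  have finZ: "finite Z" using sub fX finD by (meson finite_UN_I finite_subset)
  have "real (card Z) * (\<epsilon> * real (card X)) = (\<Sum>g\<in>Z. \<epsilon> * real (card X))" by simp
  also have "\<dots> \<le> (\<Sum>g\<in>Z. real (card {x\<in>X. g \<in> D x}))"
    by (rule sum_mono) (rule key)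
  also have "\<dots> = real (\<Sum>g\<in>Z. \<Sum>x\<in>X. if g \<in> D x then 1 else (0::nat))"
    using fX by (simp add: card_filter_sum)
  also have "\<dots> = real (\<Sum>x\<in>X. \<Sum>g\<in>Z. if g \<in> D x then 1 else (0::nat))"
    by (subst sum.swap) (rule refl)
  also have "\<dots> = real (\<Sum>x\<in>X. card {g\<in>Z. g \<in> D x})"
    using finZ by (simp add: card_filter_sum)
  also have "\<dots> \<le> real (\<Sum>x\<in>X. card (D x))"
    by (intro of_nat_mono sum_mono card_mono finD) auto
  also have "\<dots> = (\<Sum>x\<in>X. real (card (D x)))" by simp
  also have "\<dots> \<le> (\<Sum>x\<in>X. N)" by (rule sum_mono) (rule cardD)
  also have "\<dots> = N * real (card X)" by simp
  finally have "real (card Z) * \<epsilon> * real (card X) \<le> N * real (card X)" by (simp add: mult.assoc)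
  then have "real (card Z) * \<epsilon> \<le> N" using cXpos by simp
  then show ?thesis using finZ unfolding Z_def[symmetric] by blast
qed

theorem lemma3p3:
  fixes A :: "'a::group_add set" and N \<epsilon> :: real
  assumes "finite A" and "0 < \<epsilon>" and "\<epsilon> < 1"
  shows "(\<forall>X. 0 < N \<and> finite X \<and> X \<noteq> {} \<and> X \<subseteq> Stab_r N A \<longrightarrow>
            finite (Z_l \<epsilon> A X) \<and> real (card (Z_l \<epsilon> A X)) \<le> 2 * N / \<epsilon>)
       \<and> (\<forall>X. finite X \<and> X \<noteq> {} \<and> X \<subseteq> St_r (\<epsilon>^2 / 2) A \<longrightarrow>
            finite (Z_l \<epsilon> A X) \<and> real (card (Z_l \<epsilon> A X)) \<le> \<epsilon> * real (card A))"
proof (rule conjI; intro allI impI)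
  fix X assume h: "0 < N \<and> finite X \<and> X \<noteq> {} \<and> X \<subseteq> Stab_r N A"
  have p: "finite (Z_l \<epsilon> A X) \<and> real (card (Z_l \<epsilon> A X)) * \<epsilon> \<le> N"
    using part1[OF assms(1,2), of X N] h by simp
  then show "finite (Z_l \<epsilon> A X) \<and> real (card (Z_l \<epsilon> A X)) \<le> 2 * N / \<epsilon>"
    using h assms(2) by (simp add: field_simps)
next
  fix X assume h: "finite X \<and> X \<noteq> {} \<and> X \<subseteq> St_r (\<epsilon>^2 / 2) A"
  have p: "finite (Z_l \<epsilon> A X) \<and> real (card (Z_l \<epsilon> A X)) * \<epsilon> \<le> \<epsilon>^2 / 2 * real (card A)"
    using part1[OF assms(1,2), of X "\<epsilon>^2 / 2 * real (card A)"] h unfolding St_r_def by simp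
  have "real (card (Z_l \<epsilon> A X)) * \<epsilon> \<le> (\<epsilon> * real (card A) / 2) * \<epsilon>"
    using p by (simp add: power2_eq_square algebra_simps)
  then have "real (card (Z_l \<epsilon> A X)) \<le> \<epsilon> * real (card A) / 2"
    by (rule mult_right_le_imp_le[OF _ assms(2)])
  moreover have "0 \<le> \<epsilon> * real (card A)" using assms(2) by simp
  ultimately show "finite (Z_l \<epsilon> A X) \<and> real (card (Z_l \<epsilon> A X)) \<le> \<epsilon> * real (card A)"
    using p by linarith
qed

end
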